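(* The sequence $\left(\frac{H(n)}{\log n}\right)_{n=2}^\infty$ is $\mathcal I_{<1}$-convergent to $0$; that is, for every $\varepsilon>0$ the set $\{n\ge2:\frac{H(n)}{\log n}\ge\varepsilon\}$ has convergence exponent strictly less than $1$.
   Context: $\mathbb N$ denotes the set of positive integers. For $n>1$ with canonical factorization $n=p_1^{\alpha_1}\cdots p_k^{\alpha_k}$ (distinct primes $p_j$, $\alpha_j\ge1$), $H(n)=\max_{1\le j\le k}\alpha_j$. For $A\subset\mathbb N$ the convergence exponent is $\lambda(A)=\inf\{t>0:\sum_{a\in A}a^{-t}<\infty\}$, and $\mathcal I_{<1}=\{A\subset\mathbb N:\lambda(A)<1\}$. A sequence $(x_n)$ is $\mathcal I$-convergent to $L$ if for every $\varepsilon>0$ the set $\{n:|x_n-L|\ge\varepsilon\}$ belongs to $\mathcal I$. *)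

theory Defs
  imports "HOL-Analysis.Analysis" "HOL-Computational_Algebra.Primes"
begin

definition H :: "nat \<Rightarrow> nat" where
  "H n = Max ((\<lambda>p. multiplicity p n) ` prime_factors n)"

definition conv_exp :: "nat set \<Rightarrow> real" where
  "conv_exp A = Inf {t::real. t > 0 \<and> (\<lambda>a. real a powr (-t)) summable_on A}"

end

theory Submission
  imports Defs
begin

lemma H_witness:
  fixes n :: nat
  assumes "n \<ge> 2"
  shows "\<exists>p. prime p \<and> H n = multiplicity p n \<and> H n \<ge> 1"
proof -
  have fin: "finite ((\<lambda>p. multiplicity p n) ` prime_factors n)" by simp
  obtain q where q: "prime q" "q dvd n" using prime_factor_nat[of n] assms by auto
  have "q \<in> prime_factors n" using q assms by (auto simp: in_prime_factors_iff)
  hence ne: "(\<lambda>p. multiplicity p n) ` prime_factors n \<noteq> {}" by blast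
  have "H n \<in> (\<lambda>p. multiplicity p n) ` prime_factors n"
    unfolding H_def using Max_in[OF fin ne] .
  then obtain p where p: "p \<in> prime_factors n" "H n = multiplicity p n" by blast
  have "multiplicity p n > 0" using p(1) by (simp add: prime_factors_multiplicity)
  moreover have "prime p" using p(1) by (simp add: in_prime_factors_iff)
  ultimately show ?thesis using p by auto
qed

theorem theorem7:
  fixes \<epsilon> :: real
  assumes "\<epsilon> > 0"
  shows "conv_exp {n::nat. n \<ge> 2 \<and> real (H n) / ln (real n) \<ge> \<epsilon>} < 1"
proof -
  define A where "A = {n::nat. n \<ge> 2 \<and> real (H n) / ln (real n) \<ge> \<epsilon>}"
  define a where "a = min (\<epsilon> * ln 2 / 3) (1/4)"
  define t where "t = 1 - a"
  define r where "r = exp (2*a/\<epsilon>) / 2"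
  define u where "u = (\<lambda>n::nat. real n powr (-(1+a)))"
  define F where "F = (\<lambda>(p::nat,k::nat,m::nat). 2 * u p * r^k * u m)"
  have ln2: "ln (2::real) > 0" by simp
  have a0: "a > 0" using assms ln2 by (simp add: a_def)
  have a1: "a \<le> 1/4" by (simp add: a_def)
  have a2: "a \<le> \<epsilon> * ln 2 / 3" by (simp add: a_def)
  have r0: "r > 0" by (simp add: r_def)
  have "2*a/\<epsilon> \<le> 2 * ln 2 / 3" using a2 assms by (simp add: field_simps)
  also have "\<dots> < ln 2" using ln2 by simp
  finally have "exp (2*a/\<epsilon>) < exp (ln 2)" by (simp only: exp_less_cancel_iff)
  hence r1: "r < 1" by (simp add: r_def)
  have u0: "\<And>n. u n \<ge> 0" by (simp add: u_def)
  have F0: "\<And>x. F x \<ge> 0" using u0 r0 by (auto simp: F_def split: prod.splits)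
  have main: "\<forall>n\<in>A. \<exists>x. n = (case x of (p,k,m) \<Rightarrow> p^k*m) \<and> real n powr (-t) \<le> F x"
  proof
    fix n assume "n \<in> A"
    hence n2: "n \<ge> 2" and hn: "real (H n) / ln (real n) \<ge> \<epsilon>" by (auto simp: A_def)
    obtain p where p: "prime p" "H n = multiplicity p n" "H n \<ge> 1" using H_witness[OF n2] by blast
    define k where "k = H n"
    have k1: "k \<ge> 1" using p by (simp add: k_def)
    have "p^k dvd n" using p multiplicity_dvd by (simp add: k_def)
    then obtain m where nm: "n = p^k * m" by blast
    have m1: "m \<ge> 1" using nm n2 by (cases m) auto
    have p2: "p \<ge> 2" using p(1) prime_ge_2_nat by blast
    have lnpos: "ln (real n) > 0" using n2 by simp
    have kl: "\<epsilon> * ln (real n) \<le> real k" using hn lnpos by (simp add: k_def field_simps)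
    have lnk: "ln (real n) \<le> real k / \<epsilon>" using kl assms by (simp add: field_simps)
    have e1: "real n powr (2*a) \<le> exp (2*a/\<epsilon>) ^ k"
    proof -
      have "real n powr (2*a) = exp (2*a * ln (real n))" using n2 by (simp add: powr_def)
      also have "\<dots> \<le> exp (real k * (2*a/\<epsilon>))"
      proof -
        have "2*a * ln (real n) \<le> 2*a * (real k / \<epsilon>)" using lnk a0 by (intro mult_left_mono) auto
        also have "\<dots> = real k * (2*a/\<epsilon>)" by simp
        finally show ?thesis by simp
      qed
      also have "\<dots> = exp (2*a/\<epsilon>) ^ k" by (rule exp_of_nat_mult)
      finally show ?thesis .
    qed
    have e2: "real n powr (-t) = real n powr (-(1+a)) * real n powr (2*a)"
      by (simp add: t_def flip: powr_add)
    have e3: "real n powr (-(1+a)) = real (p^k) powr (-(1+a)) * u m"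
      by (simp add: nm u_def powr_mult)
    have pk: "real (p^k) = real p * real (p^(k-1))"
      using k1 by (simp add: power_eq_if[of p k])
    have e4: "real (p^(k-1)) powr (-(1+a)) \<le> 1 / 2^(k-1)"
    proof -
      have ge1: "real (p^(k-1)) \<ge> 1" using p2 by simp
      have "real (p^(k-1)) powr (-(1+a)) \<le> real (p^(k-1)) powr (-1)"
        by (rule powr_mono) (use a0 ge1 in auto)
      also have "\<dots> = 1 / real (p^(k-1))" using ge1 by (simp add: powr_neg_one)
      also have "\<dots> \<le> 1 / 2^(k-1)"
      proof -
        have "(2::real)^(k-1) \<le> real p ^(k-1)" using p2 by (intro power_mono) auto
        thus ?thesis by (simp add: frac_le)
      qed
      finally show ?thesis .
    qed
    have e5: "real (p^k) powr (-(1+a)) \<le> u p * (1 / 2^(k-1))"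
    proof -
      have "real (p^k) powr (-(1+a)) = u p * real (p^(k-1)) powr (-(1+a))"
        by (simp only: pk u_def powr_mult[of "real p" "real (p^(k-1))"] of_nat_0_le_iff)
      also have "\<dots> \<le> u p * (1 / 2^(k-1))" using e4 u0 by (intro mult_left_mono) auto
      finally show ?thesis .
    qed
    have "real n powr (-t) \<le> (u p * (1 / 2^(k-1)) * u m) * exp (2*a/\<epsilon>) ^ k"
      unfolding e2 e3
      by (intro mult_mono e1 e5 mult_right_mono u0) (auto simp: u0)
    also have "\<dots> = F (p,k,m)"
    proof -
      have "(2::real)^k = 2 * 2^(k-1)" using k1 by (simp add: power_eq_if[of 2 k])
      thus ?thesis by (simp add: F_def r_def power_divide field_simps)
    qed
    finally show "\<exists>x. n = (case x of (p,k,m) \<Rightarrow> p^k*m) \<and> real n powr (-t) \<le> F x"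
      using nm by (intro exI[of _ "(p,k,m)"]) simp
  qed
  then obtain g where g: "\<And>n. n \<in> A \<Longrightarrow> n = (case g n of (p,k,m) \<Rightarrow> p^k*m) \<and> real n powr (-t) \<le> F (g n)"
    by metis
  have inj: "inj_on g A"
    by (rule inj_on_inverseI[where g = "\<lambda>x. case x of (p,k,m) \<Rightarrow> p^k*m"]) (use g in metis)
  have su: "summable u" unfolding u_def using a0 by (simp add: summable_real_powr_iff)
  have sr: "summable (\<lambda>k. r^k)" using r0 r1 by (intro summable_geometric) simp
  define B where "B = 2 * suminf u * suminf (\<lambda>k. r^k) * suminf u"
  have finsum: "sum F T \<le> B" if T: "finite T" for T
  proof -
    define P where "P = fst ` T"
    define K where "K = fst ` snd ` T"
    define M where "M = snd ` snd ` T"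
    have sub: "T \<subseteq> P \<times> K \<times> M" by (force simp: P_def K_def M_def)
    have fins: "finite P" "finite K" "finite M" using T by (auto simp: P_def K_def M_def)
    have "sum F T \<le> sum F (P \<times> K \<times> M)"
      by (rule sum_mono2) (use fins sub F0 in auto)
    also have "sum F (P \<times> K \<times> M) = 2 * sum u P * sum (\<lambda>k. r^k) K * sum u M"
    proof -
      obtain SM where SM: "SM = sum u M" by blast
      obtain SK where SK: "SK = sum (\<lambda>k. r^k) K" by blast
      have "sum F (P \<times> K \<times> M) = (\<Sum>x\<in>P. \<Sum>y\<in>K. \<Sum>z\<in>M. 2 * u x * r^y * u z)"
        by (simp add: F_def sum.cartesian_product)
      also have "\<dots> = (\<Sum>x\<in>P. \<Sum>y\<in>K. (2 * u x * r^y) * SM)"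
        unfolding SM by (simp only: sum_distrib_left)
      also have "\<dots> = (\<Sum>x\<in>P. 2 * u x * SK) * SM"
        unfolding SK by (simp only: sum_distrib_left sum_distrib_right)
      also have "\<dots> = 2 * sum u P * SK * SM"
        by (simp only: sum_distrib_left sum_distrib_right)
      finally show ?thesis using SM SK by simp
    qed
    also have "\<dots> \<le> B"
    proof -
      have h1: "sum u P \<le> suminf u" by (rule sum_le_suminf) (use su fins u0 in auto)
      have h2: "sum (\<lambda>k. r^k) K \<le> suminf (\<lambda>k. r^k)" by (rule sum_le_suminf) (use sr fins r0 in auto)
      have h3: "sum u M \<le> suminf u" by (rule sum_le_suminf) (use su fins u0 in auto)
      have p1: "sum u P \<ge> 0" "sum u M \<ge> 0" "sum (\<lambda>k. r^k) K \<ge> 0"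
        using u0 r0 by (auto intro: sum_nonneg)
      have "sum u P * sum (\<lambda>k. r^k) K \<le> suminf u * suminf (\<lambda>k. r^k)"
        by (intro mult_mono h1 h2 p1) (use h1 p1 in linarith)
      hence "sum u P * sum (\<lambda>k. r^k) K * sum u M \<le> suminf u * suminf (\<lambda>k. r^k) * suminf u"
      proof (rule mult_mono[OF _ h3])
        show "0 \<le> sum u M" using p1 by simp
        have "0 \<le> suminf u" using p1 h1 by linarith
        moreover have "0 \<le> suminf (\<lambda>k. r^k)" using p1 h2 by linarith
        ultimately show "0 \<le> suminf u * suminf (\<lambda>k. r^k)" by simp
      qed
      thus ?thesis by (simp add: B_def mult.assoc)
    qed
    finally show ?thesis .
  qed
  have summ: "(\<lambda>n. real n powr (-t)) summable_on A"
  proof (rule nonneg_bdd_above_summable_on)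
    show "bdd_above (sum (\<lambda>n. real n powr (-t)) ` {F. F \<subseteq> A \<and> finite F})"
    proof (rule bdd_aboveI)
      fix y assume "y \<in> sum (\<lambda>n. real n powr (-t)) ` {F. F \<subseteq> A \<and> finite F}"
      then obtain S where S: "S \<subseteq> A" "finite S" "y = sum (\<lambda>n. real n powr (-t)) S" by blast
      have "y \<le> sum (F \<circ> g) S" unfolding S(3) by (rule sum_mono) (use g S in auto)
      also have "\<dots> = sum F (g ` S)" using inj S by (simp add: sum.reindex inj_on_subset)
      also have "\<dots> \<le> B" using S by (intro finsum) auto
      finally show "y \<le> B" .
    qed
  qed auto
  have tin: "t \<in> {t::real. t > 0 \<and> (\<lambda>a. real a powr (-t)) summable_on A}"
    using summ a1 by (simp add: t_def)
  have "conv_exp A \<le> t" unfolding conv_exp_def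
    by (rule cInf_lower[OF tin]) (auto intro: bdd_belowI[where m=0])
  also have "t < 1" using a0 by (simp add: t_def)
  finally show ?thesis by (simp add: A_def)
qed

end
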